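(* Let the rows $X_1,\dots,X_p$ of $\mathbf X\in\mathbb{R}^{p\times L}$ be i.i.d. zero-mean sub-Gaussian random vectors with sub-Gaussian constant $\overline\sigma<\infty$. Let $\theta\in\mathbb{R}^L$ with $\|\theta\|_2\le B$, $\delta>0$ and $s\ge2$. For $p\ge p_0(B,\delta,s,\overline\sigma)$, $$\mathbb P\Big\{|N_\theta-\mathbb E[N_\theta]|\lesssim\sqrt{p^{1+\delta}\log p}\Big\}\ge1-4p^{1-s},$$ where $\lesssim$ hides an absolute constant.
   Context: $N_\theta=\sum_{j=1}^pe^{X_j^\top\theta}$. A random vector $Z\in\mathbb{R}^L$ is zero-mean sub-Gaussian with constant $\gamma$ if $\mathbb E Z=0$ and $\mathbb E[\exp(v^\top Z)]\le\exp(\|v\|_2^2\gamma^2/2)$ for all $v\in\mathbb{R}^L$. *)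

theory Defs
  imports "HOL-Probability.Probability"
begin

text \<open>Vectors in R^L are represented as functions nat => real, of which only the
coordinates i < L matter.\<close>

definition inner_L :: "nat \<Rightarrow> (nat \<Rightarrow> real) \<Rightarrow> (nat \<Rightarrow> real) \<Rightarrow> real" where
  "inner_L L v x = (\<Sum>i<L. v i * x i)"

definition norm_L :: "nat \<Rightarrow> (nat \<Rightarrow> real) \<Rightarrow> real" where
  "norm_L L v = sqrt (\<Sum>i<L. (v i)\<^sup>2)"

definition subgaussian_law :: "nat \<Rightarrow> (nat \<Rightarrow> real) measure \<Rightarrow> real \<Rightarrow> bool" where
  "subgaussian_law L \<mu> \<gamma> \<longleftrightarrow>
     prob_space \<mu> \<and> sets \<mu> = sets (PiM {..<L} (\<lambda>_. borel)) \<and>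
     (\<forall>i<L. integrable \<mu> (\<lambda>x. x i) \<and> (\<integral>x. x i \<partial>\<mu>) = 0) \<and>
     (\<forall>v. integrable \<mu> (\<lambda>x. exp (inner_L L v x)) \<and>
          (\<integral>x. exp (inner_L L v x) \<partial>\<mu>) \<le> exp ((norm_L L v)\<^sup>2 * \<gamma>\<^sup>2 / 2))"

definition N_theta :: "nat \<Rightarrow> nat \<Rightarrow> (nat \<Rightarrow> real) \<Rightarrow> (nat \<Rightarrow> nat \<Rightarrow> real) \<Rightarrow> real" where
  "N_theta p L \<theta> \<omega> = (\<Sum>j<p. exp (inner_L L (\<omega> j) \<theta>))"

end

theory Submission
  imports Defs
begin

lemma comp_meas:
  assumes "j \<in> I"
  shows "(\<lambda>\<omega>. \<omega> j) \<in> measurable (PiM I (\<lambda>_. \<mu>)) \<mu>"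
  using assms by (rule measurable_component_singleton)

lemma comp_integrable:
  assumes "prob_space \<mu>" "j \<in> I" "integrable \<mu> g"
  shows "integrable (PiM I (\<lambda>_. \<mu>)) (\<lambda>\<omega>. g (\<omega> j) :: real)"
proof -
  have "distr (PiM I (\<lambda>_. \<mu>)) \<mu> (\<lambda>\<omega>. \<omega> j) = \<mu>"
    using assms by (intro distr_PiM_component) auto
  moreover have "g \<in> borel_measurable \<mu>" using assms(3) by auto
  ultimately show ?thesis
    using integrable_distr_eq[OF comp_meas[OF assms(2)], of g \<mu>] assms(3) by simp
qed

lemma comp_integral:
  assumes "prob_space \<mu>" "j \<in> I" "g \<in> borel_measurable \<mu>"
  shows "(\<integral>\<omega>. (g (\<omega> j) :: real) \<partial>PiM I (\<lambda>_. \<mu>)) = (\<integral>x. g x \<partial>\<mu>)"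
proof -
  have "distr (PiM I (\<lambda>_. \<mu>)) \<mu> (\<lambda>\<omega>. \<omega> j) = \<mu>"
    using assms by (intro distr_PiM_component) auto
  then show ?thesis
    using integral_distr[OF comp_meas[OF assms(2)] assms(3)] by simp
qed

lemma indep_coords:
  assumes "prob_space \<mu>" "I \<noteq> {}"
  shows "prob_space.indep_vars (PiM I (\<lambda>_. \<mu>)) (\<lambda>_. \<mu>) (\<lambda>i \<omega>. \<omega> i) I"
proof -
  interpret P: prob_space "PiM I (\<lambda>_. \<mu>)" using assms by (intro prob_space_PiM) auto
  have "distr (PiM I (\<lambda>_. \<mu>)) (PiM I (\<lambda>_. \<mu>)) (\<lambda>x. \<lambda>i\<in>I. x i) = distr (PiM I (\<lambda>_. \<mu>)) (PiM I (\<lambda>_. \<mu>)) (\<lambda>x. x)"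
    by (rule distr_cong) (auto simp: space_PiM)
  also have "\<dots> = PiM I (\<lambda>_. \<mu>)" by (rule distr_id)
  also have "\<dots> = (\<Pi>\<^sub>M i\<in>I. distr (PiM I (\<lambda>_. \<mu>)) \<mu> (\<lambda>\<omega>. \<omega> i))"
    by (rule PiM_cong) (auto simp: distr_PiM_component[of I "\<lambda>_. \<mu>"] assms)
  finally show ?thesis
    by (subst P.indep_vars_iff_distr_eq_PiM') (auto simp: assms(2) intro: comp_meas)
qed


lemma inner_L_comm: "inner_L L a b = inner_L L b a"
  unfolding inner_L_def by (simp add: mult.commute)

lemma sg_prob: "subgaussian_law L \<mu> \<sigma> \<Longrightarrow> prob_space \<mu>"
  unfolding subgaussian_law_def by simp

lemma sg_meas:
  assumes "subgaussian_law L \<mu> \<sigma>"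
  shows "(\<lambda>x. exp (inner_L L v x)) \<in> borel_measurable \<mu>"
proof -
  have s: "sets \<mu> = sets (PiM {..<L} (\<lambda>_. borel))" using assms unfolding subgaussian_law_def by simp
  have "(\<lambda>x. exp (inner_L L v x)) \<in> borel_measurable (PiM {..<L} (\<lambda>_. borel :: real measure))"
    unfolding inner_L_def by measurable
  then show ?thesis using measurable_cong_sets[OF s refl, of "borel :: real measure"] by simp
qed

lemma sg_moment:
  assumes sg: "subgaussian_law L \<mu> \<sigma>" and nB: "norm_L L \<theta> \<le> B"
  shows "integrable \<mu> (\<lambda>x. exp (inner_L L \<theta> x) ^ k)"
    and "(\<integral>x. exp (inner_L L \<theta> x) ^ k \<partial>\<mu>) \<le> exp (real k ^ 2 * B ^ 2 * \<sigma> ^ 2 / 2)"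
proof -
  define v where "v = (\<lambda>i. real k * \<theta> i)"
  have e: "exp (inner_L L \<theta> x) ^ k = exp (inner_L L v x)" for x
    unfolding inner_L_def v_def by (simp add: exp_of_nat_mult[symmetric] sum_distrib_left mult.assoc)
  have nv: "norm_L L v = real k * norm_L L \<theta>"
    unfolding norm_L_def v_def by (simp add: power_mult_distrib sum_distrib_left[symmetric] real_sqrt_mult)
  have n0: "norm_L L \<theta> \<ge> 0" unfolding norm_L_def by (simp add: sum_nonneg)
  have "(norm_L L \<theta>)^2 \<le> B^2" using n0 nB by (intro power_mono) auto
  then have "(norm_L L v)\<^sup>2 * \<sigma>\<^sup>2 / 2 \<le> real k ^ 2 * B ^ 2 * \<sigma> ^ 2 / 2"
    unfolding nv by (auto simp: power_mult_distrib intro!: mult_left_mono mult_right_mono divide_right_mono)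
  moreover have "integrable \<mu> (\<lambda>x. exp (inner_L L v x))" "(\<integral>x. exp (inner_L L v x) \<partial>\<mu>) \<le> exp ((norm_L L v)\<^sup>2 * \<sigma>\<^sup>2 / 2)"
    using sg unfolding subgaussian_law_def by auto
  ultimately show "integrable \<mu> (\<lambda>x. exp (inner_L L \<theta> x) ^ k)"
    and "(\<integral>x. exp (inner_L L \<theta> x) ^ k \<partial>\<mu>) \<le> exp (real k ^ 2 * B ^ 2 * \<sigma> ^ 2 / 2)"
    unfolding e by (auto intro: order_trans)
qed

lemma trunc_pt:
  fixes y M :: real and k :: nat
  assumes "y > 0" "M > 0" "k \<ge> 1"
  shows "y - min y M \<le> y ^ k / M ^ (k - 1)"
proof (cases "y \<le> M")
  case True then show ?thesis using assms by simp
next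
  case False
  have "1 \<le> (y / M) ^ (k - 1)" using False assms by (intro one_le_power) auto
  then have "y \<le> y * (y / M) ^ (k - 1)" using assms by simp
  also have "\<dots> = y ^ k / M ^ (k - 1)"
    using assms by (cases k) (auto simp: power_divide)
  finally show ?thesis using assms by simp
qed


lemma main_bound:
  fixes p k :: nat and M t B \<sigma> :: real
  assumes sg: "subgaussian_law L \<mu> \<sigma>" and nB: "norm_L L \<theta> \<le> B" and p: "p \<ge> 1"
    and M: "M > 0" and k: "k \<ge> 1" and t: "t \<ge> 0" and R: "t + real p * exp (real k ^ 2 * B ^ 2 * \<sigma> ^ 2 / 2) / M ^ (k - 1) \<le> R"
  defines "P \<equiv> PiM {..<p} (\<lambda>_. \<mu>)" and "(K::real) \<equiv> exp (real k ^ 2 * B ^ 2 * \<sigma> ^ 2 / 2)"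
  shows "measure P {\<omega>\<in>space P. \<bar>N_theta p L \<theta> \<omega> - (\<integral>\<omega>. N_theta p L \<theta> \<omega> \<partial>P)\<bar> \<le> R}
           \<ge> 1 - real p * K / M ^ k - 2 * exp (-2 * t ^ 2 / (real p * M ^ 2))"
proof -
  have pm: "prob_space \<mu>" using sg by (rule sg_prob)
  interpret P: prob_space P unfolding P_def using pm by (intro prob_space_PiM) auto
  define f where "f = (\<lambda>x. exp (inner_L L \<theta> x))"
  have fm[measurable]: "f \<in> borel_measurable \<mu>" unfolding f_def using sg by (rule sg_meas)
  have fpos: "f x > 0" for x unfolding f_def by simp
  have fk_int: "integrable \<mu> (\<lambda>x. f x ^ k)" and fk_le: "(\<integral>x. f x ^ k \<partial>\<mu>) \<le> K"
    unfolding f_def K_def using sg_moment[OF sg nB] by auto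
  have f_int: "integrable \<mu> f"
    unfolding f_def using sg_moment(1)[OF sg nB, of 1] by simp
  have cm: "(\<lambda>\<omega>. \<omega> j) \<in> measurable P \<mu>" if "j < p" for j
    unfolding P_def using that by (intro comp_meas) auto
  have fjm[measurable]: "(\<lambda>\<omega>. f (\<omega> j)) \<in> borel_measurable P" if "j < p" for j
    using measurable_compose[OF cm[OF that] fm] by simp
  have Nj: "N_theta p L \<theta> \<omega> = (\<Sum>j<p. f (\<omega> j))" for \<omega>
    unfolding N_theta_def f_def by (simp add: inner_L_comm)
  have Nm[measurable]: "N_theta p L \<theta> \<in> borel_measurable P"
    unfolding Nj[abs_def] by (intro borel_measurable_sum) (auto intro: fjm)
  define Ef where "Ef = (\<integral>x. f x \<partial>\<mu>)"
  have EN: "(\<integral>\<omega>. N_theta p L \<theta> \<omega> \<partial>P) = real p * Ef"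
  proof -
    have "(\<integral>\<omega>. N_theta p L \<theta> \<omega> \<partial>P) = (\<Sum>j<p. (\<integral>\<omega>. f (\<omega> j) \<partial>P))"
      unfolding Nj using f_int pm unfolding P_def by (intro Bochner_Integration.integral_sum comp_integrable) auto
    also have "\<dots> = (\<Sum>j<p. Ef)"
      unfolding Ef_def P_def using pm by (intro sum.cong refl comp_integral) auto
    finally show ?thesis by simp
  qed
  define g where "g = (\<lambda>x. min (f x) M)"
  have gm[measurable]: "g \<in> borel_measurable \<mu>" unfolding g_def by measurable
  define Z :: "nat \<Rightarrow> (nat \<Rightarrow> nat \<Rightarrow> real) \<Rightarrow> real" where "Z = (\<lambda>j \<omega>. g (\<omega> j))"
  define EZ where "EZ = (\<integral>x. g x \<partial>\<mu>)"
  have EZj: "P.expectation (Z j) = EZ" if "j < p" for j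
    unfolding Z_def EZ_def P_def using pm that by (intro comp_integral) auto
  have ind: "P.indep_vars (\<lambda>_. borel) Z {..<p}"
  proof -
    have "P.indep_vars (\<lambda>_. \<mu>) (\<lambda>i \<omega>. \<omega> i) {..<p}"
      unfolding P_def using pm p by (intro indep_coords) (auto simp: lessThan_empty_iff)
    from P.indep_vars_compose2[OF this, of "\<lambda>_. g" "\<lambda>_. borel"]
    show ?thesis unfolding Z_def by auto
  qed
  interpret H: Hoeffding_ineq P "{..<p}" Z "\<lambda>_. 0" "\<lambda>_. M" "\<Sum>j<p. P.expectation (Z j)"
  proof unfold_locales
    fix i assume "i \<in> {..<p}"
    show "AE x in P. Z i x \<in> {0..M}"
      by (intro AE_I2) (auto simp: Z_def g_def less_imp_le[OF fpos] less_imp_le[OF M])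
  qed (auto simp: ind)
  have sumM: "(\<Sum>i<p. (M - 0)\<^sup>2) = real p * M ^ 2" by simp
  have Hb: "P.prob {\<omega>\<in>space P. \<bar>(\<Sum>j<p. Z j \<omega>) - real p * EZ\<bar> \<ge> t} \<le> 2 * exp (-2 * t ^ 2 / (real p * M ^ 2))"
  proof -
    have pos: "(\<Sum>i<p. (M - 0)\<^sup>2) > 0" using p M by simp
    have "(\<Sum>j<p. P.expectation (Z j)) = real p * EZ" using EZj by simp
    with H.Hoeffding_ineq_abs_ge[OF t pos] show ?thesis by (simp only: sumM)
  qed
  define Gb where "Gb = (\<Union>j<p. {\<omega>\<in>space P. f (\<omega> j) ^ k \<ge> M ^ k})"
  have Gb: "P.prob Gb \<le> real p * K / M ^ k"
  proof -
    have "P.prob Gb \<le> (\<Sum>j<p. P.prob {\<omega>\<in>space P. f (\<omega> j) ^ k \<ge> M ^ k})"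
      unfolding Gb_def by (intro P.finite_measure_subadditive_finite) auto
    also have "\<dots> \<le> (\<Sum>j<p. K / M ^ k)"
    proof (intro sum_mono)
      fix j assume j: "j \<in> {..<p}"
      have ii: "integrable P (\<lambda>\<omega>. f (\<omega> j) ^ k)"
        unfolding P_def using pm j fk_int by (intro comp_integrable) auto
      have "P.prob {\<omega>\<in>space P. f (\<omega> j) ^ k \<ge> M ^ k} \<le> (\<integral>\<omega>. f (\<omega> j) ^ k \<partial>P) / M ^ k"
        by (rule integral_Markov_inequality_measure[OF ii, of "space P"]) (auto simp: M less_imp_le[OF fpos])
      also have "(\<integral>\<omega>. f (\<omega> j) ^ k \<partial>P) = (\<integral>x. f x ^ k \<partial>\<mu>)"
        unfolding P_def using pm j by (intro comp_integral) auto
      finally show "P.prob {\<omega>\<in>space P. f (\<omega> j) ^ k \<ge> M ^ k} \<le> K / M ^ k"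
        using fk_le M by (meson divide_right_mono order_trans zero_le_power less_imp_le)
    qed
    finally show ?thesis by simp
  qed
  have diff: "0 \<le> Ef - EZ" "Ef - EZ \<le> K / M ^ (k - 1)"
  proof -
    have gi: "integrable \<mu> g"
      by (rule Bochner_Integration.integrable_bound[OF f_int]) (auto simp: g_def intro!: AE_I2 , smt (verit) fpos M)
    have "Ef - EZ = (\<integral>x. f x - g x \<partial>\<mu>)" unfolding Ef_def EZ_def using gi f_int by simp
    also have "\<dots> \<le> (\<integral>x. f x ^ k / M ^ (k - 1) \<partial>\<mu>)"
      using gi f_int fk_int trunc_pt[OF fpos M k] by (intro integral_mono) (auto simp: g_def)
    also have "\<dots> = (\<integral>x. f x ^ k \<partial>\<mu>) / M ^ (k - 1)" by simp
    also have "\<dots> \<le> K / M ^ (k - 1)" using fk_le M by (intro divide_right_mono) auto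
    finally show "Ef - EZ \<le> K / M ^ (k - 1)" .
    have "(\<integral>x. g x \<partial>\<mu>) \<le> (\<integral>x. f x \<partial>\<mu>)"
      using gi f_int by (intro integral_mono) (auto simp: g_def)
    then show "0 \<le> Ef - EZ" unfolding Ef_def EZ_def by simp
  qed
  define T where "T = {\<omega>\<in>space P. \<bar>N_theta p L \<theta> \<omega> - (\<integral>\<omega>. N_theta p L \<theta> \<omega> \<partial>P)\<bar> \<le> R}"
  define Hb where "Hb = {\<omega>\<in>space P. \<bar>(\<Sum>j<p. Z j \<omega>) - real p * EZ\<bar> \<ge> t}"
  have Zm[measurable]: "Z j \<in> borel_measurable P" if "j < p" for j
    using H.random_variable that by auto
  have Tm: "T \<in> P.events" unfolding T_def by measurable
  have Hm: "Hb \<in> P.events" unfolding Hb_def by measurable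
  have Gm: "Gb \<in> P.events" unfolding Gb_def by measurable
  have sub: "space P - T \<subseteq> Gb \<union> Hb"
  proof
    fix \<omega> assume w: "\<omega> \<in> space P - T"
    show "\<omega> \<in> Gb \<union> Hb"
    proof (rule ccontr)
      assume "\<omega> \<notin> Gb \<union> Hb"
      then have a: "\<forall>j<p. f (\<omega> j) ^ k < M ^ k" and b: "\<bar>(\<Sum>j<p. Z j \<omega>) - real p * EZ\<bar> < t"
        using w unfolding Gb_def Hb_def by (auto simp: not_le)
      have "f (\<omega> j) < M" if "j < p" for j
        using a that power_less_imp_less_base[of "f (\<omega> j)" k M] M by auto
      then have "N_theta p L \<theta> \<omega> = (\<Sum>j<p. Z j \<omega>)"
        unfolding Nj Z_def g_def by (intro sum.cong) auto
      then have NZ: "N_theta p L \<theta> \<omega> = (\<Sum>j<p. Z j \<omega>)" .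
      have "\<bar>N_theta p L \<theta> \<omega> - (\<integral>\<omega>. N_theta p L \<theta> \<omega> \<partial>P)\<bar> \<le> \<bar>(\<Sum>j<p. Z j \<omega>) - real p * EZ\<bar> + real p * (Ef - EZ)"
      proof -
        have h: "real p * Ef - real p * EZ \<ge> 0" using diff by (simp add: right_diff_distrib[symmetric])
        show ?thesis unfolding EN NZ right_diff_distrib using h by arith
      qed
      also have "\<dots> \<le> t + real p * (K / M ^ (k - 1))"
        using b diff by (intro add_mono mult_left_mono) auto
      finally show False using w R unfolding T_def K_def by auto
    qed
  qed
  have "P.prob (space P - T) \<le> P.prob (Gb \<union> Hb)"
    using Gm Hm by (intro P.finite_measure_mono sub) auto
  also have "\<dots> \<le> P.prob Gb + P.prob Hb" using Gm Hm by (rule measure_Un_le)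
  also have "\<dots> \<le> real p * K / M ^ k + 2 * exp (-2 * t ^ 2 / (real p * M ^ 2))"
    using Gb Hb unfolding Hb_def by (intro add_mono) auto
  finally have "P.prob (space P - T) \<le> real p * K / M ^ k + 2 * exp (-2 * t ^ 2 / (real p * M ^ 2))" .
  then show ?thesis using P.prob_compl[OF Tm] unfolding T_def[symmetric] by simp
qed


lemma arith_bounds:
  fixes x \<delta> s K :: real and k :: nat
  assumes x3: "x \<ge> 3" and d: "\<delta> > 0" and s: "s \<ge> 2" and K1: "K \<ge> 1" and xK: "x \<ge> 4 * K ^ 2"
    and xs: "x \<ge> (2 * s) powr (2 / \<delta>)" and kd: "real (k - 1) * \<delta> / 4 \<ge> s + 1" and k: "k \<ge> 1"
  defines "M \<equiv> x powr (\<delta> / 4)" and "t \<equiv> sqrt (x powr (1 + \<delta>) * ln x) / 2"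
  shows "x * K / M ^ k + 2 * exp (-2 * t ^ 2 / (x * M ^ 2)) \<le> 4 * x powr (1 - s)"
    and "t + x * K / M ^ (k - 1) \<le> 1 * sqrt (x powr (1 + \<delta>) * ln x)"
proof -
  have x0: "x > 0" using x3 by simp
  have x1: "x \<ge> 1" using x3 by simp
  have M1: "M \<ge> 1" unfolding M_def using x1 d by (intro ge_one_powr_ge_zero) auto
  have Mpow: "M ^ n = x powr (real n * (\<delta> / 4))" for n
    unfolding M_def using x0 by (simp add: powr_power)
  have A1: "M ^ (k - 1) \<ge> x powr (s + 1)"
    unfolding Mpow using kd x1 by (intro powr_mono) auto
  have A2: "M ^ k \<ge> M ^ (k - 1)" using M1 k by (intro power_increasing) auto
  have xps: "x / x powr (s + 1) = x powr (- s)"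
  proof -
    have "x / x powr (s + 1) = x powr 1 / x powr (s + 1)" using x0 by simp
    also have "\<dots> = x powr (1 - (s + 1))" by (simp only: powr_diff)
    also have "\<dots> = x powr (- s)" by (simp add: algebra_simps)
    finally show ?thesis .
  qed
  have xpsle: "x powr (- s) \<le> 1" using x1 s by (simp add: powr_minus_divide ge_one_powr_ge_zero)
  have B: "x * K / M ^ j \<le> K * x powr (- s)" if "M ^ j \<ge> x powr (s + 1)" for j
  proof -
    have "x * K / M ^ j \<le> x * K / x powr (s + 1)"
      using that x0 K1 M1 by (intro divide_left_mono) auto
    also have "\<dots> = K * x powr (- s)" using xps by (metis times_divide_eq_right mult.commute)
    finally show ?thesis .
  qed
  have "K \<le> K * K" using K1 by (simp add: mult_le_cancel_left1)
  then have Kx: "K \<le> x" using xK K1 unfolding power2_eq_square by linarith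
  have i: "x * K / M ^ k \<le> x powr (1 - s)"
  proof -
    have "x * K / M ^ k \<le> K * x powr (- s)" using A1 A2 by (intro B) auto
    also have "\<dots> \<le> x * x powr (- s)" using Kx by (intro mult_right_mono) auto
    also have "\<dots> = x powr (1 - s)" using x0 by (simp only: powr_diff powr_minus_divide powr_one_gt_zero_iff) (use x0 in simp)
    finally show ?thesis .
  qed
  have ln1: "ln x \<ge> 1"
  proof -
    have "exp 1 \<le> x" using exp_le x3 by linarith
    then show ?thesis using x0 by (simp add: ln_ge_iff)
  qed
  have xd: "x powr (1 + \<delta>) \<ge> x" using powr_mono[of 1 "1 + \<delta>" x] x1 d by simp
  have tK: "t \<ge> K"
  proof -
    have "sqrt x \<ge> 2 * K" using xK by (intro real_le_rsqrt) (simp add: power_mult_distrib)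
    moreover have "sqrt (x powr (1 + \<delta>) * ln x) \<ge> sqrt x"
    proof (intro real_sqrt_le_mono)
      have "x * 1 \<le> x powr (1 + \<delta>) * ln x" using xd ln1 x0 by (intro mult_mono) auto
      then show "x \<le> x powr (1 + \<delta>) * ln x" by simp
    qed
    ultimately show ?thesis unfolding t_def by linarith
  qed
  show "t + x * K / M ^ (k - 1) \<le> 1 * sqrt (x powr (1 + \<delta>) * ln x)"
  proof -
    have "x * K / M ^ (k - 1) \<le> K * x powr (- s)" using A1 by (intro B) auto
    also have "\<dots> \<le> K" using xpsle K1 by (simp add: mult_left_le)
    finally show ?thesis using tK unfolding t_def by simp
  qed
  have ii: "exp (-2 * t ^ 2 / (x * M ^ 2)) \<le> x powr (1 - s)"
  proof -
    have t2: "t ^ 2 = x powr (1 + \<delta>) * ln x / 4"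
      unfolding t_def using ln1 by (simp add: power_divide)
    have xM: "x * M ^ 2 = x powr (1 + \<delta> / 2)"
      unfolding Mpow using x0 by (simp add: powr_add)
    have "x powr (1 + \<delta>) = x powr (1 + \<delta> / 2) * x powr (\<delta> / 2)"
      by (simp add: powr_add[symmetric] add.commute)
    then have e1: "-2 * t ^ 2 / (x * M ^ 2) = - (x powr (\<delta> / 2) / 2) * ln x"
      unfolding t2 xM using x0 by (simp add: field_simps)
    have "x powr (\<delta> / 2) \<ge> ((2 * s) powr (2 / \<delta>)) powr (\<delta> / 2)"
      using xs d s by (intro powr_mono2) auto
    also have "((2 * s) powr (2 / \<delta>)) powr (\<delta> / 2) = 2 * s"
      using d s by (simp add: powr_powr)
    finally have "- (x powr (\<delta> / 2) / 2) \<le> 1 - s" by simp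
    then have "- (x powr (\<delta> / 2) / 2) * ln x \<le> (1 - s) * ln x"
      using ln1 by (intro mult_right_mono) auto
    then have "exp (-2 * t ^ 2 / (x * M ^ 2)) \<le> exp ((1 - s) * ln x)" unfolding e1 by simp
    also have "\<dots> = x powr (1 - s)" using x0 by (simp add: powr_def)
    finally show ?thesis .
  qed
  show "x * K / M ^ k + 2 * exp (-2 * t ^ 2 / (x * M ^ 2)) \<le> 4 * x powr (1 - s)"
    using i ii by (smt (verit) powr_ge_zero)
qed


theorem lemma14:
  shows "\<exists>C>0. \<forall>(B::real) (\<delta>::real) (s::real) (\<sigma>::real). \<delta> > 0 \<and> s \<ge> 2 \<longrightarrow>
    (\<exists>p0::nat. \<forall>p\<ge>p0. \<forall>(L::nat) (\<mu>::(nat \<Rightarrow> real) measure) (\<theta>::nat \<Rightarrow> real).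
       subgaussian_law L \<mu> \<sigma> \<and> norm_L L \<theta> \<le> B \<longrightarrow>
       (let P = PiM {..<p} (\<lambda>_. \<mu>);
            EN = (\<integral>\<omega>. N_theta p L \<theta> \<omega> \<partial>P)
        in measure P {\<omega> \<in> space P.
              \<bar>N_theta p L \<theta> \<omega> - EN\<bar> \<le> C * sqrt (real p powr (1 + \<delta>) * ln (real p))}
           \<ge> 1 - 4 * real p powr (1 - s)))"
proof (intro exI[of _ "1::real"] conjI allI impI)
  show "(0::real) < 1" by simp
  fix B \<delta> s \<sigma> :: real
  assume ds: "\<delta> > 0 \<and> s \<ge> 2"
  then have d: "\<delta> > 0" and s: "s \<ge> 2" by auto
  define k where "k = nat \<lceil>4 * (s + 1) / \<delta>\<rceil> + 1"
  define K where "K = exp (real k ^ 2 * B ^ 2 * \<sigma> ^ 2 / 2)"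
  define p0 where "p0 = nat \<lceil>max 3 (max (4 * K ^ 2) ((2 * s) powr (2 / \<delta>)))\<rceil>"
  have k1: "k \<ge> 1" unfolding k_def by simp
  have kd: "real (k - 1) * \<delta> / 4 \<ge> s + 1"
  proof -
    have "real (k - 1) \<ge> 4 * (s + 1) / \<delta>" unfolding k_def by linarith
    then have "real (k - 1) * \<delta> \<ge> 4 * (s + 1) / \<delta> * \<delta>" using d by (intro mult_right_mono) auto
    then show ?thesis using d by simp
  qed
  have K1: "K \<ge> 1" unfolding K_def by simp
  show "\<exists>p0::nat. \<forall>p\<ge>p0. \<forall>(L::nat) (\<mu>::(nat \<Rightarrow> real) measure) (\<theta>::nat \<Rightarrow> real).
       subgaussian_law L \<mu> \<sigma> \<and> norm_L L \<theta> \<le> B \<longrightarrow>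
       (let P = PiM {..<p} (\<lambda>_. \<mu>);
            EN = (\<integral>\<omega>. N_theta p L \<theta> \<omega> \<partial>P)
        in measure P {\<omega> \<in> space P.
              \<bar>N_theta p L \<theta> \<omega> - EN\<bar> \<le> 1 * sqrt (real p powr (1 + \<delta>) * ln (real p))}
           \<ge> 1 - 4 * real p powr (1 - s))"
  proof (intro exI[of _ p0] allI impI)
    fix p L \<mu> \<theta>
    assume p: "p \<ge> p0" and h: "subgaussian_law L \<mu> \<sigma> \<and> norm_L L \<theta> \<le> B"
    have px: "real p \<ge> max 3 (max (4 * K ^ 2) ((2 * s) powr (2 / \<delta>)))"
      using p unfolding p0_def by linarith
    then have x3: "real p \<ge> 3" and xK: "real p \<ge> 4 * K ^ 2" and xs: "real p \<ge> (2 * s) powr (2 / \<delta>)"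
      by auto
    define M where "M = real p powr (\<delta> / 4)"
    define t where "t = sqrt (real p powr (1 + \<delta>) * ln (real p)) / 2"
    have ab: "real p * K / M ^ k + 2 * exp (-2 * t ^ 2 / (real p * M ^ 2)) \<le> 4 * real p powr (1 - s)"
         "t + real p * K / M ^ (k - 1) \<le> 1 * sqrt (real p powr (1 + \<delta>) * ln (real p))"
      using arith_bounds[OF x3 d s K1 xK xs kd k1] unfolding M_def t_def by auto
    have M0: "M > 0" unfolding M_def using x3 by simp
    have t0: "t \<ge> 0" unfolding t_def using x3 by simp
    have p1: "p \<ge> 1" using x3 by simp
    note mb = main_bound[OF conjunct1[OF h] conjunct2[OF h] p1 M0 k1 t0 ab(2)[unfolded K_def]]
    show "let P = PiM {..<p} (\<lambda>_. \<mu>);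
            EN = (\<integral>\<omega>. N_theta p L \<theta> \<omega> \<partial>P)
        in measure P {\<omega> \<in> space P.
              \<bar>N_theta p L \<theta> \<omega> - EN\<bar> \<le> 1 * sqrt (real p powr (1 + \<delta>) * ln (real p))}
           \<ge> 1 - 4 * real p powr (1 - s)"
      unfolding Let_def using mb ab(1) unfolding K_def by linarith
  qed
qed

end
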